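(* Let $r,s,t,u,v$ be non-negative integers with $u+v=4s-2r+t^2+2t+4$. Let $G=\left(r,\,r,\,s,\,s+\binom{t+1}{2},\,s+\binom{t+2}{2},\,u\right)$ and $H=\left(r,\,r,\,s,\,s+\binom{t+1}{2},\,s+\binom{t+2}{2},\,v\right)$, with interesting factors $g(x)$ and $h(x)$ respectively. Then $$g(x)=-h(-x+6s+2t^2+4t+6).$$
   Context: All graphs are finite and simple. For integers $1\le j\le k$, a $(j,k)$-biclique is a graph whose vertex set is the disjoint union of a $j$-clique and a $k$-clique, with an arbitrary set of additional edges each joining a vertex of the $j$-clique to a vertex of the $k$-clique. For non-negative integers $a,b,c,d,e,f$, the notation $(a,b,c,d,e,f)$ denotes the $(3,k)$-biclique with $k=a+b+c+d+e+f$, whose $3$-clique is $\{v_1,v_2,v_3\}$, in which every vertex of the $k$-clique is adjacent to exactly one or exactly two of $v_1,v_2,v_3$, and exactly $a$ (resp. $b$, $c$) vertices of the $k$-clique are adjacent to $v_1$ only (resp. $v_2$ only, $v_3$ only), and exactly $d$ (resp. $e$, $f$) vertices of the $k$-clique are adjacent to exactly $v_2$ and $v_3$ (resp. exactly $v_1$ and $v_3$, exactly $v_1$ and $v_2$). This determines the graph up to isomorphism. The interesting factor of a $(3,k)$-biclique $G$ is the cubic polynomial $P_G(x)/(x)_k$, where $P_G$ is the chromatic polynomial and $(x)_k=x(x-1)\cdots(x-k+1)$. *)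

theory Defs
  imports "HOL-Library.FuncSet" "HOL-Computational_Algebra.Polynomial"
begin

text \<open>A finite simple graph is given by a finite vertex set V and a symmetric,
irreflexive adjacency relation adj (only its restriction to V matters).\<close>

definition proper_colourings :: "'v set \<Rightarrow> ('v \<Rightarrow> 'v \<Rightarrow> bool) \<Rightarrow> nat \<Rightarrow> ('v \<Rightarrow> nat) set" where
  "proper_colourings V adj n =
     {col \<in> V \<rightarrow>\<^sub>E {..<n}. \<forall>x\<in>V. \<forall>y\<in>V. adj x y \<longrightarrow> col x \<noteq> col y}"

definition chromatic_poly :: "'v set \<Rightarrow> ('v \<Rightarrow> 'v \<Rightarrow> bool) \<Rightarrow> real poly" where
  "chromatic_poly V adj =
     (THE p. \<forall>n::nat. poly p (real n) = real (card (proper_colourings V adj n)))"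

definition falling_poly :: "nat \<Rightarrow> real poly" where
  "falling_poly k = (\<Prod>i<k. [:- real i, 1:])"

type_synonym six = "nat \<times> nat \<times> nat \<times> nat \<times> nat \<times> nat"

fun bsize :: "six \<Rightarrow> nat" where
  "bsize (a,b,c,d,e,f) = a+b+c+d+e+f"

text \<open>3-clique vertices are Inl 0, Inl 1, Inl 2 (standing for v1,v2,v3);
k-clique vertices are Inr j, j < k. The set of 3-clique neighbours of Inr j.\<close>
fun bnbrs :: "six \<Rightarrow> nat \<Rightarrow> nat set" where
  "bnbrs (a,b,c,d,e,f) j =
     (if j < a then {0}
      else if j < a+b then {1}
      else if j < a+b+c then {2}
      else if j < a+b+c+d then {1,2}
      else if j < a+b+c+d+e then {0,2}
      else {0,1})"

definition bverts :: "six \<Rightarrow> (nat + nat) set" where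
  "bverts T = Inl ` {..<3} \<union> Inr ` {..<bsize T}"

fun badj :: "six \<Rightarrow> nat + nat \<Rightarrow> nat + nat \<Rightarrow> bool" where
  "badj T (Inl i) (Inl i') = (i \<noteq> i')"
| "badj T (Inr j) (Inr j') = (j \<noteq> j')"
| "badj T (Inl i) (Inr j) = (i \<in> bnbrs T j)"
| "badj T (Inr j) (Inl i) = (i \<in> bnbrs T j)"

definition interesting_factor :: "six \<Rightarrow> real poly" where
  "interesting_factor T =
     (THE q. chromatic_poly (bverts T) (badj T) = q * falling_poly (bsize T))"

end

theory Submission
  imports Defs
begin


lemma triple_count:
  fixes S0 S1 S2 :: "'a set"
  assumes f: "finite S0" "finite S1" "finite S2"
  shows "int (card {(x,y,z). x\<in>S0 \<and> y\<in>S1 \<and> z\<in>S2 \<and> x\<noteq>y \<and> x\<noteq>z \<and> y\<noteq>z})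
    = int (card S0) * int (card S1) * int (card S2) - int (card (S0\<inter>S1)) * int (card S2) - int (card (S0\<inter>S2)) * int (card S1)
      - int (card (S1\<inter>S2)) * int (card S0) + 2 * int (card (S0\<inter>S1\<inter>S2))"
proof -
  define U where "U = S0 \<times> S1 \<times> S2"
  define E1 where "E1 = (\<lambda>(x,z). (x,x,z)) ` ((S0\<inter>S1) \<times> S2)"
  define E2 where "E2 = (\<lambda>(x,y). (x,y,x)) ` ((S0\<inter>S2) \<times> S1)"
  define E3 where "E3 = (\<lambda>(y,x). (x,y,y)) ` ((S1\<inter>S2) \<times> S0)"
  define D where "D = (\<lambda>x. (x,x,x)) ` (S0\<inter>S1\<inter>S2)"
  have X: "{(x,y,z). x\<in>S0 \<and> y\<in>S1 \<and> z\<in>S2 \<and> x\<noteq>y \<and> x\<noteq>z \<and> y\<noteq>z} = U - (E1 \<union> E2 \<union> E3)"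
    unfolding U_def E1_def E2_def E3_def by auto
  have sub: "E1 \<union> E2 \<union> E3 \<subseteq> U" unfolding U_def E1_def E2_def E3_def by auto
  have fU: "finite U" using f unfolding U_def by auto
  have fE: "finite E1" "finite E2" "finite E3" using f unfolding E1_def E2_def E3_def by auto
  have cU: "card U = card S0 * card S1 * card S2" unfolding U_def by (simp add: card_cartesian_product)
  have c1: "card E1 = card (S0\<inter>S1) * card S2" unfolding E1_def
    by (subst card_image) (auto simp: inj_on_def card_cartesian_product)
  have c2: "card E2 = card (S0\<inter>S2) * card S1" unfolding E2_def
    by (subst card_image) (auto simp: inj_on_def card_cartesian_product)
  have c3: "card E3 = card (S1\<inter>S2) * card S0" unfolding E3_def
    by (subst card_image) (auto simp: inj_on_def card_cartesian_product)
  have cD: "card D = card (S0\<inter>S1\<inter>S2)" unfolding D_def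
    by (subst card_image) (auto simp: inj_on_def)
  have i12: "E1 \<inter> E2 = D" unfolding E1_def E2_def D_def by auto
  have i123: "(E1 \<union> E2) \<inter> E3 = D" unfolding E1_def E2_def E3_def D_def by auto
  have u12: "int (card (E1 \<union> E2)) = int (card E1) + int (card E2) - int (card D)"
    using card_Un_Int[OF fE(1) fE(2)] i12 by simp
  have u123: "int (card (E1 \<union> E2 \<union> E3)) = int (card (E1 \<union> E2)) + int (card E3) - int (card D)"
    using card_Un_Int[of "E1 \<union> E2" E3] fE i123 by simp
  have "int (card (U - (E1 \<union> E2 \<union> E3))) = int (card U) - int (card (E1 \<union> E2 \<union> E3))"
    using card_Diff_subset[OF _ sub] fE card_mono[OF fU sub] by (simp add: of_nat_diff)
  then show ?thesis unfolding X using u12 u123 cU c1 c2 c3 cD by simp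
qed



definition NN :: "six \<Rightarrow> nat \<Rightarrow> nat set" where
  "NN T i = {j. j < bsize T \<and> i \<in> bnbrs T j}"

definition GG :: "nat \<Rightarrow> nat \<Rightarrow> (nat \<Rightarrow> nat) set" where
  "GG k n = {g \<in> {..<k} \<rightarrow>\<^sub>E {..<n}. inj_on g {..<k}}"

definition XX :: "six \<Rightarrow> nat \<Rightarrow> (nat \<Rightarrow> nat) \<Rightarrow> (nat \<times> nat \<times> nat) set" where
  "XX T n g = {(x,y,z). x \<in> {..<n} - g ` NN T 0 \<and> y \<in> {..<n} - g ` NN T 1 \<and> z \<in> {..<n} - g ` NN T 2
      \<and> x\<noteq>y \<and> x\<noteq>z \<and> y\<noteq>z}"

definition phi :: "nat \<Rightarrow> (nat + nat \<Rightarrow> nat) \<Rightarrow> (nat \<Rightarrow> nat) \<times> nat \<times> nat \<times> nat" where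
  "phi k col = (restrict (\<lambda>j. col (Inr j)) {..<k}, col (Inl 0), col (Inl 1), col (Inl 2))"

definition psi :: "(nat \<Rightarrow> nat) \<times> nat \<times> nat \<times> nat \<Rightarrow> (nat + nat \<Rightarrow> nat)" where
  "psi p = (case p of (g,x,y,z) \<Rightarrow> (\<lambda>w. case w of Inl i \<Rightarrow> (if i = 0 then x else if i = 1 then y else if i = 2 then z else undefined)
      | Inr j \<Rightarrow> g j))"

lemma bnbrs_sub: "bnbrs T j \<subseteq> {0,1,2}"
  by (cases T) auto

lemma bij_col:
  "bij_betw (phi (bsize T)) (proper_colourings (bverts T) (badj T) n) (Sigma (GG (bsize T) n) (XX T n))"
proof (rule bij_betw_byWitness[where f' = psi])
  let ?k = "bsize T"
  show "\<forall>col\<in>proper_colourings (bverts T) (badj T) n. psi (phi ?k col) = col"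
  proof
    fix col assume c: "col \<in> proper_colourings (bverts T) (badj T) n"
    show "psi (phi ?k col) = col"
    proof
      fix w show "psi (phi ?k col) w = col w"
      proof (cases w)
        case (Inl i)
        show ?thesis
        proof (cases "i < 3")
          case True
          then have "i = 0 \<or> i = 1 \<or> i = 2" by auto
          then show ?thesis using Inl by (auto simp: psi_def phi_def)
        next
          case False
          then have "Inl i \<notin> bverts T" by (auto simp: bverts_def)
          then have "col (Inl i) = undefined" using c by (simp add: proper_colourings_def PiE_def extensional_def)
          then show ?thesis using Inl False by (simp add: psi_def phi_def)
        qed
      next
        case (Inr j)
        then show ?thesis using c
          by (cases "j < ?k") (auto simp: psi_def phi_def proper_colourings_def bverts_def PiE_def extensional_def)
      qed
    qed
  qed
  show "\<forall>p\<in>Sigma (GG ?k n) (XX T n). phi ?k (psi p) = p"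
    by (auto simp: psi_def phi_def GG_def PiE_def)
  show "phi ?k ` proper_colourings (bverts T) (badj T) n \<subseteq> Sigma (GG ?k n) (XX T n)"
  proof
    fix p assume "p \<in> phi ?k ` proper_colourings (bverts T) (badj T) n"
    then obtain col where c: "col \<in> proper_colourings (bverts T) (badj T) n" and p: "p = phi ?k col" by auto
    have cV: "col \<in> bverts T \<rightarrow>\<^sub>E {..<n}" and pr: "\<And>x y. x \<in> bverts T \<Longrightarrow> y \<in> bverts T \<Longrightarrow> badj T x y \<Longrightarrow> col x \<noteq> col y"
      using c unfolding proper_colourings_def by auto
    have inV: "Inl i \<in> bverts T" if "i < 3" for i using that by (simp add: bverts_def)
    have inV2: "Inr j \<in> bverts T" if "j < ?k" for j using that by (simp add: bverts_def)
    have g: "restrict (\<lambda>j. col (Inr j)) {..<?k} \<in> GG ?k n"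
      unfolding GG_def using cV inV2 pr[OF inV2 inV2]
      by (auto simp: inj_on_def PiE_def Pi_def)
    have x: "(col (Inl 0), col (Inl 1), col (Inl 2)) \<in> XX T n (restrict (\<lambda>j. col (Inr j)) {..<?k})"
      unfolding XX_def NN_def using cV inV inV2 pr[OF inV inV2] pr[OF inV inV]
      by (auto simp: PiE_def Pi_def)
    show "p \<in> Sigma (GG ?k n) (XX T n)" using g x p by (simp add: phi_def)
  qed
  show "psi ` Sigma (GG ?k n) (XX T n) \<subseteq> proper_colourings (bverts T) (badj T) n"
  proof
    fix c assume "c \<in> psi ` Sigma (GG ?k n) (XX T n)"
    then obtain g x y z where g: "g \<in> GG ?k n" and xyz: "(x,y,z) \<in> XX T n g" and c: "c = psi (g,x,y,z)" by auto
    have gP: "g \<in> {..<?k} \<rightarrow>\<^sub>E {..<n}" and gi: "inj_on g {..<?k}" using g by (auto simp: GG_def)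
    have ext: "c \<in> bverts T \<rightarrow>\<^sub>E {..<n}"
    proof
      fix w assume "w \<in> bverts T" then show "c w \<in> {..<n}"
        using gP xyz by (auto simp: c psi_def bverts_def XX_def)
    next
      fix w assume "w \<notin> bverts T" then show "c w = undefined"
        using gP by (cases w) (auto simp: c psi_def bverts_def PiE_def extensional_def)
    qed
    have X: "x \<notin> g ` NN T 0" "y \<notin> g ` NN T 1" "z \<notin> g ` NN T 2" "x \<noteq> y" "x \<noteq> z" "y \<noteq> z"
      using xyz by (auto simp: XX_def)
    have cl: "c (Inl i) \<notin> g ` NN T i" if "i < 3" for i
    proof -
      have "i = 0 \<or> i = 1 \<or> i = 2" using that by auto
      then show ?thesis using X by (auto simp: c psi_def)
    qed
    have cll: "c (Inl i) \<noteq> c (Inl i')" if "i < 3" "i' < 3" "i \<noteq> i'" for i i'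
    proof -
      have "i = 0 \<or> i = 1 \<or> i = 2" "i' = 0 \<or> i' = 1 \<or> i' = 2" using that by auto
      then show ?thesis using X that(3) by (auto simp: c psi_def)
    qed
    have cr: "c (Inr j) = g j" for j by (simp add: c psi_def)
    have "\<forall>a\<in>bverts T. \<forall>b\<in>bverts T. badj T a b \<longrightarrow> c a \<noteq> c b"
    proof (intro ballI impI)
      fix a b assume a: "a \<in> bverts T" and b: "b \<in> bverts T" and ab: "badj T a b"
      show "c a \<noteq> c b"
      proof (cases a)
        case (Inl i)
        then have i: "i < 3" using a by (auto simp: bverts_def)
        show ?thesis
        proof (cases b)
          case (Inl i')
          then have "i' < 3" using b by (auto simp: bverts_def)
          then show ?thesis using i ab Inl \<open>a = Inl i\<close> cll by simp
        next
          case (Inr j)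
          then have j: "j < ?k" using b by (auto simp: bverts_def)
          have "i \<in> bnbrs T j" using ab Inr \<open>a = Inl i\<close> by simp
          then have "j \<in> NN T i" using j by (simp add: NN_def)
          then show ?thesis using cl[OF i] Inr \<open>a = Inl i\<close> cr by force
        qed
      next
        case (Inr j)
        then have j: "j < ?k" using a by (auto simp: bverts_def)
        show ?thesis
        proof (cases b)
          case (Inl i)
          then have i: "i < 3" using b by (auto simp: bverts_def)
          have "i \<in> bnbrs T j" using ab Inl \<open>a = Inr j\<close> by simp
          then have "j \<in> NN T i" using j by (simp add: NN_def)
          then show ?thesis using cl[OF i] Inl \<open>a = Inr j\<close> cr by force
        next
          case (Inr j')
          then have "j' < ?k" using b by (auto simp: bverts_def)
          then show ?thesis using j ab Inr \<open>a = Inr j\<close> gi cr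
            by (auto simp: inj_on_def)
        qed
      qed
    qed
    then show "c \<in> proper_colourings (bverts T) (badj T) n"
      using ext by (simp add: proper_colourings_def)
  qed
qed


lemma NN_eqs:
  fixes a b c d e f :: nat
  defines "T \<equiv> (a,b,c,d,e,f)" and "k \<equiv> a+b+c+d+e+f"
  shows "NN T 0 = {..<a} \<union> {a+b+c+d..<k}"
    and "NN T 1 = {a..<a+b} \<union> {a+b+c..<a+b+c+d} \<union> {a+b+c+d+e..<k}"
    and "NN T 2 = {a+b..<a+b+c+d+e}"
    and "NN T 0 \<union> NN T 1 = {..<k} - {a+b..<a+b+c}"
    and "NN T 0 \<union> NN T 2 = {..<k} - {a..<a+b}"
    and "NN T 1 \<union> NN T 2 = {..<k} - {..<a}"
    and "NN T 0 \<union> NN T 1 \<union> NN T 2 = {..<k}"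
  unfolding NN_def T_def k_def by (auto split: if_splits)

lemma NN_cards:
  fixes a b c d e f :: nat
  defines "T \<equiv> (a,b,c,d,e,f)" and "k \<equiv> a+b+c+d+e+f"
  shows "card (NN T 0) = a+e+f"
    and "card (NN T 1) = b+d+f"
    and "card (NN T 2) = c+d+e"
    and "card (NN T 0 \<union> NN T 1) = k - c"
    and "card (NN T 0 \<union> NN T 2) = k - b"
    and "card (NN T 1 \<union> NN T 2) = k - a"
    and "card (NN T 0 \<union> NN T 1 \<union> NN T 2) = k"
proof -
  note E = NN_eqs[of a b c d e f, folded T_def k_def]
  show "card (NN T 0) = a+e+f" unfolding E by (subst card_Un_disjoint) (auto simp: k_def)
  show "card (NN T 1) = b+d+f" unfolding E
    by (subst card_Un_disjoint, simp, simp, force)+ (auto simp: k_def)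
  show "card (NN T 2) = c+d+e" unfolding E by simp
  show "card (NN T 0 \<union> NN T 1) = k - c" unfolding E(4)
    by (subst card_Diff_subset) (auto simp: k_def)
  show "card (NN T 0 \<union> NN T 2) = k - b" unfolding E(5)
    by (subst card_Diff_subset) (auto simp: k_def)
  show "card (NN T 1 \<union> NN T 2) = k - a" unfolding E(6)
    by (subst card_Diff_subset) (auto simp: k_def)
  show "card (NN T 0 \<union> NN T 1 \<union> NN T 2) = k" unfolding E(7) by simp
qed

lemma NN_sub: "NN T i \<subseteq> {..<bsize T}"
  by (auto simp: NN_def)

lemma card_compl_img:
  assumes g: "g \<in> GG k n" and A: "A \<subseteq> {..<k}"
  shows "card ({..<n} - g ` A) = n - card A" and "card A \<le> n"
proof -
  have gP: "g \<in> {..<k} \<rightarrow>\<^sub>E {..<n}" and gi: "inj_on g {..<k}" using g by (auto simp: GG_def)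
  have sub: "g ` A \<subseteq> {..<n}" using gP A by auto
  have ci: "card (g ` A) = card A" using inj_on_subset[OF gi A] by (simp add: card_image)
  show "card ({..<n} - g ` A) = n - card A" using card_Diff_subset[OF _ sub] ci
    by (simp add: finite_subset[OF sub])
  show "card A \<le> n" using card_mono[OF _ sub] ci by simp
qed

fun Qi :: "six \<Rightarrow> nat \<Rightarrow> int" where
  "Qi (a,b,c,d,e,f) n = (let y = int n - int (a+b+c+d+e+f) in
     (y+b+c+d)*(y+a+c+e)*(y+a+b+f) - (y+c)*(y+a+b+f) - (y+b)*(y+a+c+e) - (y+a)*(y+b+c+d) + 2*y)"

lemma card_XX:
  fixes a b c d e f :: nat
  defines "T \<equiv> (a,b,c,d,e,f)"
  assumes g: "g \<in> GG (bsize T) n"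
  shows "int (card (XX T n g)) = Qi T n"
proof -
  let ?k = "bsize T"
  define S where "S i = {..<n} - g ` NN T i" for i
  have X: "XX T n g = {(x,y,z). x\<in>S 0 \<and> y\<in>S 1 \<and> z\<in>S 2 \<and> x\<noteq>y \<and> x\<noteq>z \<and> y\<noteq>z}"
    unfolding XX_def S_def by simp
  have I2: "S i \<inter> S j = {..<n} - g ` (NN T i \<union> NN T j)" for i j unfolding S_def by auto
  have I3: "S 0 \<inter> S 1 \<inter> S 2 = {..<n} - g ` (NN T 0 \<union> NN T 1 \<union> NN T 2)" unfolding S_def by auto
  have k: "?k = a+b+c+d+e+f" by (simp add: T_def)
  have sub: "NN T i \<subseteq> {..<?k}" "NN T i \<union> NN T j \<subseteq> {..<?k}" "NN T 0 \<union> NN T 1 \<union> NN T 2 \<subseteq> {..<?k}" for i j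
    using NN_sub by auto
  note C = NN_cards[of a b c d e f, folded T_def]
  have kn: "?k \<le> n" using card_compl_img(2)[OF g sub(3)] C(7) k by simp
  have "int (card (XX T n g)) = int (card (S 0)) * int (card (S 1)) * int (card (S 2))
      - int (card (S 0\<inter>S 1)) * int (card (S 2)) - int (card (S 0\<inter>S 2)) * int (card (S 1))
      - int (card (S 1\<inter>S 2)) * int (card (S 0)) + 2 * int (card (S 0\<inter>S 1\<inter>S 2))"
    unfolding X by (rule triple_count) (auto simp: S_def)
  also have "\<dots> = Qi T n"
  proof -
    have c1: "int (card (S i)) = int n - int (card (NN T i))" for i unfolding S_def
      using card_compl_img[OF g sub(1)] by (simp add: of_nat_diff)
    have c2: "int (card (S i \<inter> S j)) = int n - int (card (NN T i \<union> NN T j))" for i j unfolding I2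
      using card_compl_img[OF g sub(2)] by (simp add: of_nat_diff)
    have c3: "int (card (S 0 \<inter> S 1 \<inter> S 2)) = int n - int ?k" unfolding I3
      using card_compl_img[OF g sub(3)] C(7) k by (simp add: of_nat_diff)
    have ka: "a \<le> ?k" "b \<le> ?k" "c \<le> ?k" using k by auto
    show ?thesis unfolding c1 c2 c3 C(1-6) using ka
      by (simp add: T_def of_nat_diff Let_def algebra_simps)
  qed
  finally show ?thesis .
qed



fun qpoly :: "six \<Rightarrow> real poly" where
  "qpoly (a,b,c,d,e,f) = (let y = [:- real (a+b+c+d+e+f), 1:] in
     (y + [:real (b+c+d):]) * (y + [:real (a+c+e):]) * (y + [:real (a+b+f):])
     - (y + [:real c:]) * (y + [:real (a+b+f):]) - (y + [:real b:]) * (y + [:real (a+c+e):])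
     - (y + [:real a:]) * (y + [:real (b+c+d):]) + smult 2 y)"

lemma poly_qpoly: "poly (qpoly (a,b,c,d,e,f)) x = (let y = x - real (a+b+c+d+e+f) in
     (y+real b+real c+real d)*(y+real a+real c+real e)*(y+real a+real b+real f) - (y+real c)*(y+real a+real b+real f)
     - (y+real b)*(y+real a+real c+real e) - (y+real a)*(y+real b+real c+real d) + 2*y)"
  apply (simp add: Let_def)
  apply algebra
  done

lemma poly_qpoly_nat0: "poly (qpoly (a,b,c,d,e,f)) (real n) = of_int (Qi (a,b,c,d,e,f) n)"
  unfolding poly_qpoly Qi.simps Let_def by simp

lemma poly_qpoly_nat: "poly (qpoly T) (real n) = of_int (Qi T n)"
  by (cases T) (simp only: poly_qpoly_nat0)

lemma card_GG: "real (card (GG k n)) = poly (falling_poly k) (real n)"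
proof -
  have "card (GG k n) = prod ((-) n) {0..<k}"
    unfolding GG_def using card_inj_on_subset_funcset[of "{..<k}" "{..<n}" "{..<k}"] by simp
  moreover have "real (prod ((-) n) {0..<k}) = (\<Prod>i<k. real n - real i)"
  proof (cases "k \<le> n")
    case True
    then show ?thesis by (simp add: of_nat_prod atLeast0LessThan of_nat_diff)
  next
    case False
    then have "n \<in> {0..<k}" "n \<in> {..<k}" by auto
    then have "prod ((-) n) {0..<k} = 0" "(\<Prod>i<k. real n - real i) = 0"
      by (auto intro!: prod_zero)
    then show ?thesis by (metis of_nat_0)
  qed
  ultimately show ?thesis by (simp add: falling_poly_def poly_prod)
qed

lemma count_eq: "real (card (proper_colourings (bverts T) (badj T) n))
   = poly (falling_poly (bsize T) * qpoly T) (real n)"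
proof -
  obtain a b c d e f where T: "T = (a,b,c,d,e,f)" by (cases T) auto
  let ?k = "bsize T"
  have fG: "finite (GG ?k n)" unfolding GG_def by (rule finite_subset[of _ "{..<?k} \<rightarrow>\<^sub>E {..<n}"]) (auto intro: finite_PiE)
  have fX: "finite (XX T n g)" for g
    by (rule finite_subset[of _ "{..<n} \<times> {..<n} \<times> {..<n}"]) (auto simp: XX_def)
  have "card (proper_colourings (bverts T) (badj T) n) = card (Sigma (GG ?k n) (XX T n))"
    by (rule bij_betw_same_card[OF bij_col])
  also have "\<dots> = (\<Sum>g\<in>GG ?k n. card (XX T n g))" using fG fX by (simp add: card_SigmaI)
  finally have cP: "card (proper_colourings (bverts T) (badj T) n) = (\<Sum>g\<in>GG ?k n. card (XX T n g))" .
  show ?thesis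
  proof (cases "GG ?k n = {}")
    case True
    then have "poly (falling_poly ?k) (real n) = 0" using card_GG[of ?k n] by simp
    then show ?thesis using cP True by simp
  next
    case False
    have "real (card (proper_colourings (bverts T) (badj T) n)) = (\<Sum>g\<in>GG ?k n. real_of_int (int (card (XX T n g))))"
      unfolding cP by simp
    also have "\<dots> = (\<Sum>g\<in>GG ?k n. real_of_int (Qi T n))"
      using card_XX[where a=a and b=b and c=c and d=d and e=e and f=f, folded T] by simp
    also have "\<dots> = real (card (GG ?k n)) * poly (qpoly T) (real n)" by (simp add: poly_qpoly_nat)
    also have "\<dots> = poly (falling_poly ?k * qpoly T) (real n)" by (simp add: card_GG)
    finally show ?thesis .
  qed
qed

lemma poly_eq_nat:
  fixes p q :: "real poly"
  assumes "\<And>n::nat. poly p (real n) = poly q (real n)"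
  shows "p = q"
proof (rule ccontr)
  assume "p \<noteq> q"
  then have "p - q \<noteq> 0" by simp
  then have fin: "finite {x. poly (p - q) x = 0}" by (rule poly_roots_finite)
  have "range real \<subseteq> {x. poly (p - q) x = 0}" using assms by auto
  then have "finite (range (real :: nat \<Rightarrow> real))" using fin finite_subset by blast
  then have "finite (UNIV :: nat set)" using finite_imageD[of real UNIV] inj_of_nat by (simp add: inj_on_def)
  then show False by simp
qed

lemma falling_nz: "falling_poly k \<noteq> 0"
  unfolding falling_poly_def by (simp add: prod_zero_iff)

lemma chrom_eq: "chromatic_poly (bverts T) (badj T) = falling_poly (bsize T) * qpoly T"
  unfolding chromatic_poly_def
  by (rule the_equality) (auto simp: count_eq intro: poly_eq_nat)

lemma interesting_eq: "interesting_factor T = qpoly T"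
  unfolding interesting_factor_def chrom_eq
proof (rule the_equality)
  show "falling_poly (bsize T) * qpoly T = qpoly T * falling_poly (bsize T)" by (simp add: mult.commute)
  fix q assume "falling_poly (bsize T) * qpoly T = q * falling_poly (bsize T)"
  then have "q * falling_poly (bsize T) = qpoly T * falling_poly (bsize T)" by (metis mult.commute)
  then show "q = qpoly T" using falling_nz[of "bsize T"] by (metis mult_right_cancel)
qed



lemma ch1: "2 * real (Suc t choose 2) = real t * (real t + 1)"
  by (induction t) (auto simp: algebra_simps numeral_2_eq_2)

lemma ch2: "2 * real (Suc (Suc t) choose 2) = (real t + 1) * (real t + 2)"
  using ch1[of "Suc t"] by (simp add: algebra_simps)

lemma key:
  fixes x r s t u v A B :: real
  assumes "2 * A = t * (t + 1)" "2 * B = (t+1)*(t+2)" "u + v = 4*s - 2*r + t^2 + 2*t + 4"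
  shows "(let y = x - (r+r+s+(s+A)+(s+B)+u) in
     (y+r+s+(s+A))*(y+r+s+(s+B))*(y+r+r+u) - (y+s)*(y+r+r+u)
     - (y+r)*(y+r+s+(s+B)) - (y+r)*(y+r+s+(s+A)) + 2*y) =
   - (let y = (- x + 6 * s + 2 * t ^ 2 + 4 * t + 6) - (r+r+s+(s+A)+(s+B)+v) in
     (y+r+s+(s+A))*(y+r+s+(s+B))*(y+r+r+v) - (y+s)*(y+r+r+v)
     - (y+r)*(y+r+s+(s+B)) - (y+r)*(y+r+s+(s+A)) + 2*y)"
  using assms unfolding Let_def by algebra

theorem mainTheorem9:
  fixes r s t u v :: nat
  assumes "int u + int v = 4 * int s - 2 * int r + int t ^ 2 + 2 * int t + 4"
  shows "\<forall>x::real.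
    poly (interesting_factor (r, r, s, s + (t+1 choose 2), s + (t+2 choose 2), u)) x =
    - poly (interesting_factor (r, r, s, s + (t+1 choose 2), s + (t+2 choose 2), v))
        (- x + 6 * real s + 2 * real t ^ 2 + 4 * real t + 6)"
proof
  fix x :: real
  have h: "real u + real v = 4 * real s - 2 * real r + real t ^ 2 + 2 * real t + 4"
  proof -
    have "real_of_int (int u + int v) = real_of_int (4 * int s - 2 * int r + int t ^ 2 + 2 * int t + 4)"
      using assms by simp
    then show ?thesis by simp
  qed
  show "poly (interesting_factor (r, r, s, s + (t+1 choose 2), s + (t+2 choose 2), u)) x =
    - poly (interesting_factor (r, r, s, s + (t+1 choose 2), s + (t+2 choose 2), v))
        (- x + 6 * real s + 2 * real t ^ 2 + 4 * real t + 6)"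
    unfolding interesting_eq poly_qpoly
    using key[OF ch1[of t] ch2[of t] h, of x] by (simp add: add_ac)
qed


end
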